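(* Let $\mathscr{V}_3$ be the variety of triples $(\mathcal{C}_1,\mathcal{C}_2,\mathcal{C}_3)$ of conics in $\mathbb{P}^3$ (over $\mathbb{C}$) that lie on a common nondegenerate quadric surface. For $\{i,j,k\}=\{1,2,3\}$ define the rational function $\alpha_i^2$ on $\mathscr{V}_3$ by $$\alpha_i^2=\frac{(\boldsymbol{\ell}_{ij}^T C_i^{*}\boldsymbol{\ell}_{ik})^2}{(\boldsymbol{\ell}_{ij}^T C_i^{*}\boldsymbol{\ell}_{ij})(\boldsymbol{\ell}_{ik}^T C_i^{*}\boldsymbol{\ell}_{ik})},$$ where, after choosing homogeneous coordinates identifying the plane $\mathcal{P}_i$ of $\mathcal{C}_i$ with $\mathbb{P}^2$, $C_i$ is a symmetric $3\times3$ matrix of $\mathcal{C}_i$, $C_i^{*}$ is its adjugate, and $\boldsymbol{\ell}_{ij},\boldsymbol{\ell}_{ik}\in\mathbb{C}^3$ are coordinate vectors of the lines $\mathcal{P}_i\cap\mathcal{P}_j$ and $\mathcal{P}_i\cap\mathcal{P}_k$ in $\mathcal{P}_i$ (the value does not depend on these choices). Then $\alpha_1^2,\alpha_2^2,\alpha_3^2$ are algebraically independent over $\mathbb{C}$.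
   Context: A conic in $\mathbb{P}^3$ is a nondegenerate conic lying in a plane; here the three planes $\mathcal{P}_1,\mathcal{P}_2,\mathcal{P}_3$ are the planes of the three conics. A line $\boldsymbol{\ell}$ in $\mathbb{P}^2$ is represented by $\boldsymbol{\ell}\in\mathbb{C}^3$ with the line being $\{\bar{x}:\boldsymbol{\ell}^T\bar{x}=0\}$; $\boldsymbol{\ell}^TC^*\boldsymbol{\ell}=0$ iff $\boldsymbol{\ell}$ is tangent to the conic $\bar{x}^TC\bar{x}=0$. A nondegenerate quadric surface is the zero set of a quadratic form in 4 variables with nonsingular matrix. *)

theory Defs
  imports "HOL-Analysis.Analysis"
begin

definition bform :: "complex^'n \<Rightarrow> complex^'n^'n \<Rightarrow> complex^'n \<Rightarrow> complex" where
  "bform x A y = (\<Sum>i\<in>UNIV. \<Sum>j\<in>UNIV. x$i * A$i$j * y$j)"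

definition lform :: "complex^'n \<Rightarrow> complex^'n \<Rightarrow> complex" where
  "lform l x = (\<Sum>i\<in>UNIV. l$i * x$i)"

text \<open>Adjugate (transposed cofactor matrix) of a 3x3 matrix, written out via the
  cyclic cofactor formula (indices of type 3 are taken mod 3).\<close>
definition adj3 :: "complex^3^3 \<Rightarrow> complex^3^3" where
  "adj3 A = (\<chi> i j. A$(j+1)$(i+1) * A$(j+2)$(i+2) - A$(j+1)$(i+2) * A$(j+2)$(i+1))"

text \<open>A plane of P^3 with homogeneous coordinates: an injective linear map C^3 -> C^4
  (a 4x3 matrix of rank 3), whose image is the plane.\<close>
definition plane_param :: "complex^3^4 \<Rightarrow> bool" where
  "plane_param M \<longleftrightarrow> (\<forall>x. M *v x = 0 \<longrightarrow> x = 0)"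

definition nondeg_conic :: "complex^3^3 \<Rightarrow> bool" where
  "nondeg_conic C \<longleftrightarrow> transpose C = C \<and> det C \<noteq> 0"

definition nondeg_quadric :: "complex^4^4 \<Rightarrow> bool" where
  "nondeg_quadric Q \<longleftrightarrow> transpose Q = Q \<and> det Q \<noteq> 0"

definition conic_on_quadric :: "complex^3^4 \<Rightarrow> complex^3^3 \<Rightarrow> complex^4^4 \<Rightarrow> bool" where
  "conic_on_quadric M C Q \<longleftrightarrow>
     (\<forall>x. x \<noteq> 0 \<and> bform x C x = 0 \<longrightarrow> bform (M *v x) Q (M *v x) = 0)"

text \<open>l (in the coordinates of the plane parametrised by Mi) is a coordinate vector of the
  line Pi \<inter> Pj, i.e. its zero set in Pi is exactly the intersection with Pj.\<close>
definition isect_line :: "complex^3^4 \<Rightarrow> complex^3^4 \<Rightarrow> complex^3 \<Rightarrow> bool" where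
  "isect_line Mi Mj l \<longleftrightarrow> l \<noteq> 0 \<and> (\<forall>x. lform l x = 0 \<longleftrightarrow> (\<exists>y. Mi *v x = Mj *v y))"

definition alpha_sq :: "complex^3^3 \<Rightarrow> complex^3 \<Rightarrow> complex^3 \<Rightarrow> complex" where
  "alpha_sq C l m = (bform l (adj3 C) m)^2 / (bform l (adj3 C) l * bform m (adj3 C) m)"

definition alpha_defined :: "complex^3^3 \<Rightarrow> complex^3 \<Rightarrow> complex^3 \<Rightarrow> bool" where
  "alpha_defined C l m \<longleftrightarrow> bform l (adj3 C) l * bform m (adj3 C) m \<noteq> 0"

definition V3_data ::
  "complex^4^4 \<Rightarrow> complex^3^4 \<Rightarrow> complex^3^4 \<Rightarrow> complex^3^4 \<Rightarrow>
   complex^3^3 \<Rightarrow> complex^3^3 \<Rightarrow> complex^3^3 \<Rightarrow>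
   complex^3 \<Rightarrow> complex^3 \<Rightarrow> complex^3 \<Rightarrow> complex^3 \<Rightarrow> complex^3 \<Rightarrow> complex^3 \<Rightarrow> bool" where
  "V3_data Q M1 M2 M3 C1 C2 C3 l12 l13 l21 l23 l31 l32 \<longleftrightarrow>
     nondeg_quadric Q \<and>
     plane_param M1 \<and> plane_param M2 \<and> plane_param M3 \<and>
     nondeg_conic C1 \<and> nondeg_conic C2 \<and> nondeg_conic C3 \<and>
     conic_on_quadric M1 C1 Q \<and> conic_on_quadric M2 C2 Q \<and> conic_on_quadric M3 C3 Q \<and>
     isect_line M1 M2 l12 \<and> isect_line M1 M3 l13 \<and>
     isect_line M2 M1 l21 \<and> isect_line M2 M3 l23 \<and>
     isect_line M3 M1 l31 \<and> isect_line M3 M2 l32 \<and>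
     alpha_defined C1 l12 l13 \<and> alpha_defined C2 l21 l23 \<and> alpha_defined C3 l31 l32"

definition poly3_eval :: "(nat\<times>nat\<times>nat) set \<Rightarrow> (nat\<times>nat\<times>nat \<Rightarrow> complex) \<Rightarrow>
    complex \<Rightarrow> complex \<Rightarrow> complex \<Rightarrow> complex" where
  "poly3_eval S c x y z = (\<Sum>(a,b,d)\<in>S. c (a,b,d) * x^a * y^b * z^d)"

end

theory Submission
  imports Defs "HOL-Computational_Algebra.Polynomial"
begin


lemma uni_zero:
  fixes c :: "'e \<Rightarrow> complex" and phi :: "'e \<Rightarrow> nat"
  assumes fin: "finite S" and inj: "inj_on phi S" and T: "infinite T"
    and z: "\<And>t. t \<in> T \<Longrightarrow> (\<Sum>e\<in>S. c e * t ^ phi e) = 0"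
  shows "\<forall>e\<in>S. c e = 0"
proof
  fix e0 assume e0: "e0 \<in> S"
  define p where "p = (\<Sum>e\<in>S. monom (c e) (phi e))"
  have pe: "poly p t = (\<Sum>e\<in>S. c e * t ^ phi e)" for t
    unfolding p_def by (simp add: poly_sum poly_monom)
  have "p = 0"
  proof (rule ccontr)
    assume "p \<noteq> 0"
    then have "finite {t. poly p t = 0}" by (rule poly_roots_finite)
    moreover have "T \<subseteq> {t. poly p t = 0}" using z pe by auto
    ultimately show False using T finite_subset by blast
  qed
  have "coeff p (phi e0) = (\<Sum>e\<in>S. if e = e0 then c e else 0)"
    unfolding p_def coeff_sum coeff_monom
    apply (rule sum.cong[OF refl])
    using inj e0 by (auto simp: inj_on_def)
  also have "\<dots> = c e0" using fin e0 by simp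
  finally show "c e0 = 0" using \<open>p = 0\<close> by simp
qed

lemma kron_inj:
  fixes N :: nat
  assumes "\<forall>(a,b,d)\<in>S. a < N \<and> b < N \<and> d < N"
  shows "inj_on (\<lambda>(a,b,d). a + N*(b + N*d)) S"
proof (rule inj_onI)
  fix x y assume xs: "x \<in> S" and ys: "y \<in> S" and eqq: "(\<lambda>(a,b,d). a + N*(b + N*d)) x = (\<lambda>(a,b,d). a + N*(b + N*d)) y"
  obtain a b d where x: "x = (a,b,d)" by (cases x) auto
  obtain a' b' d' where y: "y = (a',b',d')" by (cases y) auto
  have s: "(a,b,d) \<in> S" "(a',b',d') \<in> S" using xs ys x y by auto
  have eq: "a + N*(b+N*d) = a' + N*(b'+N*d')" using eqq x y by simp
  have lt: "a<N" "b<N" "d<N" "a'<N" "b'<N" "d'<N" using assms s by auto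
  have "(a + N*(b+N*d)) mod N = a" using lt by simp
  moreover have "(a' + N*(b'+N*d')) mod N = a'" using lt by simp
  ultimately have 1: "a = a'" using eq by simp
  have "(a + N*(b+N*d)) div N = b + N*d" using lt by simp
  moreover have "(a' + N*(b'+N*d')) div N = b' + N*d'" using lt by simp
  ultimately have 2: "b + N*d = b' + N*d'" using eq by simp
  have "b = b'" using arg_cong[OF 2, of "\<lambda>x. x mod N"] lt by simp
  moreover have "d = d'" using arg_cong[OF 2, of "\<lambda>x. x div N"] lt by simp
  ultimately show "x = y" using 1 x y by simp
qed

lemma poly3_zero:
  assumes fin: "finite S"
    and z: "\<And>x y w::real. 0 < x \<Longrightarrow> x < 1/4 \<Longrightarrow> 0 < y \<Longrightarrow> y < 1/4 \<Longrightarrow> 0 < w \<Longrightarrow> w < 1/4 \<Longrightarrow>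
          poly3_eval S c (of_real x) (of_real y) (of_real w) = 0"
  shows "\<forall>e\<in>S. c e = 0"
proof -
  define N where "N = Suc (Max (insert 0 ((\<lambda>(a,b,d). a+b+d) ` S)))"
  have bnd: "\<forall>(a,b,d)\<in>S. a < N \<and> b < N \<and> d < N"
  proof clarify
    fix a b d assume "(a,b,d) \<in> S"
    then have "a+b+d \<le> Max (insert 0 ((\<lambda>(a,b,d). a+b+d) ` S))"
      using fin by (intro Max_ge) force+
    then show "a < N \<and> b < N \<and> d < N" unfolding N_def by linarith
  qed
  have N1: "N \<ge> 1" unfolding N_def by simp
  define phi where "phi = (\<lambda>(a::nat,b::nat,d::nat). a + N*(b + N*d))"
  have inj: "inj_on phi S" unfolding phi_def by (rule kron_inj[OF bnd])
  have inf: "infinite (complex_of_real ` {0<..<1/4})"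
    using finite_imageD[of complex_of_real "{0<..<(1/4::real)}"] inj_of_real
    by (metis infinite_Ioo inj_on_subset subset_UNIV zero_less_divide_1_iff zero_less_numeral)
  show ?thesis
  proof (rule uni_zero[OF fin inj inf])
    fix t assume "t \<in> complex_of_real ` {0<..<1/4}"
    then obtain r where r: "0 < r" "r < 1/4" "t = of_real r" by auto
    have "r^N \<le> r^1" using power_decreasing[of 1 N r] r N1 by simp
    then have p1: "0 < r^N" "r^N < 1/4" using r by auto
    have "N*N \<ge> 1" using N1 by simp
    then have "r^(N*N) \<le> r^1" using power_decreasing[of 1 "N*N" r] r by simp
    then have p2: "0 < r^(N*N)" "r^(N*N) < 1/4" using r by auto
    have "poly3_eval S c (of_real r) (of_real (r^N)) (of_real (r^(N*N))) = 0"
      using z r p1 p2 by blast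
    moreover have "poly3_eval S c (of_real r) (of_real (r^N)) (of_real (r^(N*N))) = (\<Sum>e\<in>S. c e * t ^ phi e)"
      unfolding poly3_eval_def phi_def r(3)
      by (rule sum.cong[OF refl]) (auto simp: power_add power_mult mult.assoc)
    ultimately show "(\<Sum>e\<in>S. c e * t ^ phi e) = 0" by simp
  qed
qed



definition Qm :: "complex \<Rightarrow> complex \<Rightarrow> complex \<Rightarrow> complex^4^4" where
  "Qm a b c = (\<chi> i j. if i = j then 1 else if (i=1 \<and> j=2) \<or> (i=2 \<and> j=1) then a
     else if (i=1 \<and> j=3) \<or> (i=3 \<and> j=1) then b else if (i=2 \<and> j=3) \<or> (i=3 \<and> j=2) then c else 0)"
definition Cm :: "complex \<Rightarrow> complex^3^3" where
  "Cm t = (\<chi> i j. if i = j then 1 else if (i=1 \<and> j=2) \<or> (i=2 \<and> j=1) then t else 0)"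
definition Mp1 :: "complex^3^4" where
  "Mp1 = (\<chi> i j. if (i=2 \<and> j=1) \<or> (i=3 \<and> j=2) \<or> (i=4 \<and> j=3) then 1 else 0)"
definition Mp2 :: "complex^3^4" where
  "Mp2 = (\<chi> i j. if (i=1 \<and> j=1) \<or> (i=3 \<and> j=2) \<or> (i=4 \<and> j=3) then 1 else 0)"
definition Mp3 :: "complex^3^4" where
  "Mp3 = (\<chi> i j. if (i=1 \<and> j=1) \<or> (i=2 \<and> j=2) \<or> (i=4 \<and> j=3) then 1 else 0)"
definition ev1 :: "complex^3" where "ev1 = (\<chi> i. if i = 1 then 1 else 0)"
definition ev2 :: "complex^3" where "ev2 = (\<chi> i. if i = 2 then 1 else 0)"

lemma M1v: "Mp1 *v x = (\<chi> i. if i = 1 then 0 else if i = 2 then x$1 else if i = 3 then x$2 else x$3)"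
  unfolding Mp1_def by (auto simp: vec_eq_iff matrix_vector_mult_def sum_3 forall_4)
lemma M2v: "Mp2 *v x = (\<chi> i. if i = 1 then x$1 else if i = 2 then 0 else if i = 3 then x$2 else x$3)"
  unfolding Mp2_def by (auto simp: vec_eq_iff matrix_vector_mult_def sum_3 forall_4)
lemma M3v: "Mp3 *v x = (\<chi> i. if i = 1 then x$1 else if i = 2 then x$2 else if i = 3 then 0 else x$3)"
  unfolding Mp3_def by (auto simp: vec_eq_iff matrix_vector_mult_def sum_3 forall_4)

lemma pp: "plane_param Mp1" "plane_param Mp2" "plane_param Mp3"
  unfolding plane_param_def M1v M2v M3v by (auto simp: vec_eq_iff forall_4 forall_3)

lemma cq1: "conic_on_quadric Mp1 (Cm c) (Qm a b c)"
  unfolding conic_on_quadric_def M1v bform_def Qm_def Cm_def by (simp add: sum_3 sum_4 algebra_simps)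
lemma cq2: "conic_on_quadric Mp2 (Cm b) (Qm a b c)"
  unfolding conic_on_quadric_def M2v bform_def Qm_def Cm_def by (simp add: sum_3 sum_4 algebra_simps)
lemma cq3: "conic_on_quadric Mp3 (Cm a) (Qm a b c)"
  unfolding conic_on_quadric_def M3v bform_def Qm_def Cm_def by (simp add: sum_3 sum_4 algebra_simps)

lemma lf1: "lform ev1 x = x$1" unfolding lform_def ev1_def by (simp add: sum_3)
lemma lf2: "lform ev2 x = x$2" unfolding lform_def ev2_def by (simp add: sum_3)
lemma e_nz: "ev1 \<noteq> 0" "ev2 \<noteq> 0" unfolding ev1_def ev2_def by (auto simp: vec_eq_iff)

lemma il12: "isect_line Mp1 Mp2 ev1"
  unfolding isect_line_def lf1
proof (intro conjI e_nz allI iffI)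
  fix x :: "complex^3" assume "x$1 = 0"
  then show "\<exists>y. Mp1 *v x = Mp2 *v y"
    by (intro exI[of _ "\<chi> i. if i=1 then 0 else x$i"]) (auto simp: M1v M2v M3v vec_eq_iff forall_4)
qed (auto simp: M1v M2v M3v vec_eq_iff forall_4)

lemma il13: "isect_line Mp1 Mp3 ev2"
  unfolding isect_line_def lf2
proof (intro conjI e_nz allI iffI)
  fix x :: "complex^3" assume "x$2 = 0"
  then show "\<exists>y. Mp1 *v x = Mp3 *v y"
    by (intro exI[of _ "\<chi> i. if i=1 then 0 else if i=2 then x$1 else x$3"]) (auto simp: M1v M2v M3v vec_eq_iff forall_4)
qed (auto simp: M1v M2v M3v vec_eq_iff forall_4)

lemma il21: "isect_line Mp2 Mp1 ev1"
  unfolding isect_line_def lf1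
proof (intro conjI e_nz allI iffI)
  fix x :: "complex^3" assume "x$1 = 0"
  then show "\<exists>y. Mp2 *v x = Mp1 *v y"
    by (intro exI[of _ "\<chi> i. if i=1 then 0 else x$i"]) (auto simp: M1v M2v M3v vec_eq_iff forall_4)
qed (auto simp: M1v M2v M3v vec_eq_iff forall_4)

lemma il23: "isect_line Mp2 Mp3 ev2"
  unfolding isect_line_def lf2
proof (intro conjI e_nz allI iffI)
  fix x :: "complex^3" assume "x$2 = 0"
  then show "\<exists>y. Mp2 *v x = Mp3 *v y"
    by (intro exI[of _ "\<chi> i. if i=2 then 0 else x$i"]) (auto simp: M1v M2v M3v vec_eq_iff forall_4)
qed (auto simp: M1v M2v M3v vec_eq_iff forall_4)

lemma il31: "isect_line Mp3 Mp1 ev1"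
  unfolding isect_line_def lf1
proof (intro conjI e_nz allI iffI)
  fix x :: "complex^3" assume "x$1 = 0"
  then show "\<exists>y. Mp3 *v x = Mp1 *v y"
    by (intro exI[of _ "\<chi> i. if i=1 then x$2 else if i=2 then 0 else x$3"]) (auto simp: M1v M2v M3v vec_eq_iff forall_4)
qed (auto simp: M1v M2v M3v vec_eq_iff forall_4)

lemma il32: "isect_line Mp3 Mp2 ev2"
  unfolding isect_line_def lf2
proof (intro conjI e_nz allI iffI)
  fix x :: "complex^3" assume "x$2 = 0"
  then show "\<exists>y. Mp3 *v x = Mp2 *v y"
    by (intro exI[of _ "\<chi> i. if i=2 then 0 else x$i"]) (auto simp: M1v M2v M3v vec_eq_iff forall_4)
qed (auto simp: M1v M2v M3v vec_eq_iff forall_4)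

lemma det_Cm: "det (Cm t) = 1 - t*t"
  unfolding det_3 Cm_def by simp

lemma nc: assumes "t*t \<noteq> 1" shows "nondeg_conic (Cm t)"
  unfolding nondeg_conic_def det_Cm using assms
  by (auto simp: Cm_def vec_eq_iff transpose_def forall_3)

lemma adjCm: "adj3 (Cm t) $ 1 $ 1 = 1" "adj3 (Cm t) $ 2 $ 2 = 1" "adj3 (Cm t) $ 1 $ 2 = -t"
  "adj3 (Cm t) $ 2 $ 1 = -t"
  unfolding adj3_def Cm_def by simp_all

lemma bf11: "bform ev1 A ev1 = A$1$1" "bform ev2 A ev2 = A$2$2" "bform ev1 A ev2 = A$1$2"
  unfolding bform_def ev1_def ev2_def by (simp_all add: sum_3)

lemma ad: "alpha_defined (Cm t) ev1 ev2"
  unfolding alpha_defined_def bf11 adjCm by simp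

lemma alpha_Cm: "alpha_sq (Cm t) ev1 ev2 = t^2"
  unfolding alpha_sq_def bf11 adjCm by simp

lemma det_4:
  fixes A :: "'a::comm_ring_1^4^4"
  shows "det A =
 A$1$1*A$2$2*A$3$3*A$4$4 - A$1$1*A$2$2*A$3$4*A$4$3 - A$1$1*A$2$3*A$3$2*A$4$4 + A$1$1*A$2$3*A$3$4*A$4$2
 + A$1$1*A$2$4*A$3$2*A$4$3 - A$1$1*A$2$4*A$3$3*A$4$2
 - A$1$2*A$2$1*A$3$3*A$4$4 + A$1$2*A$2$1*A$3$4*A$4$3 + A$1$2*A$2$3*A$3$1*A$4$4 - A$1$2*A$2$3*A$3$4*A$4$1
 - A$1$2*A$2$4*A$3$1*A$4$3 + A$1$2*A$2$4*A$3$3*A$4$1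
 + A$1$3*A$2$1*A$3$2*A$4$4 - A$1$3*A$2$1*A$3$4*A$4$2 - A$1$3*A$2$2*A$3$1*A$4$4 + A$1$3*A$2$2*A$3$4*A$4$1
 + A$1$3*A$2$4*A$3$1*A$4$2 - A$1$3*A$2$4*A$3$2*A$4$1
 - A$1$4*A$2$1*A$3$2*A$4$3 + A$1$4*A$2$1*A$3$3*A$4$2 + A$1$4*A$2$2*A$3$1*A$4$3 - A$1$4*A$2$2*A$3$3*A$4$1
 - A$1$4*A$2$3*A$3$1*A$4$2 + A$1$4*A$2$3*A$3$2*A$4$1"
proof -
  have f1: "finite {2::4, 3, 4}" "1 \<notin> {2::4, 3, 4}"
    by auto
  have f2: "finite {3::4, 4}" "2 \<notin> {3::4, 4}"
    by auto
  have f3: "finite {4::4}" "3 \<notin> {4::4}"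
    by auto
  show ?thesis
    unfolding det_def UNIV_4
    unfolding sum_over_permutations_insert[OF f1]
    unfolding sum_over_permutations_insert[OF f2]
    unfolding sum_over_permutations_insert[OF f3]
    unfolding permutes_sing
    by (simp add: sign_swap_id permutation_swap_id sign_compose swap_id_eq permutation_compose algebra_simps)
qed

lemma det_Qm: "det (Qm a b c) = 1 - a*a - b*b - c*c + 2*a*b*c"
  unfolding det_4 Qm_def by (simp add: algebra_simps)

lemma nq:
  fixes a b c :: real
  assumes "0 < a" "a < 1/2" "0 < b" "b < 1/2" "0 < c" "c < 1/2"
  shows "nondeg_quadric (Qm (of_real a) (of_real b) (of_real c))"
proof -
  have "a*a < (1/2)*(1/2)" by (rule mult_strict_mono) (use assms in auto)
  moreover have "b*b < (1/2)*(1/2)" by (rule mult_strict_mono) (use assms in auto)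
  moreover have "c*c < (1/2)*(1/2)" by (rule mult_strict_mono) (use assms in auto)
  moreover have "0 < a*b*c" using assms by simp
  ultimately have "1 - a*a - b*b - c*c + 2*a*b*c \<noteq> 0" by linarith
  then have "det (Qm (of_real a) (of_real b) (of_real c)) \<noteq> 0"
    unfolding det_Qm by (metis (mono_tags) of_real_1 of_real_add of_real_diff of_real_mult of_real_numeral of_real_eq_0_iff)
  then show ?thesis unfolding nondeg_quadric_def
    by (auto simp: Qm_def vec_eq_iff transpose_def forall_4)
qed


lemma sqrt_bnd:
  fixes x :: real assumes "0 < x" "x < 1/4" shows "0 < sqrt x" "sqrt x < 1/2"
proof -
  show "0 < sqrt x" using assms by simp
  have "sqrt x < sqrt (1/4)" using assms by (simp only: real_sqrt_less_iff)
  also have "sqrt (1/4) = (1/2::real)" by (simp add: real_sqrt_divide)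
  finally show "sqrt x < 1/2" .
qed

lemma sq_ne1:
  fixes s :: real assumes "0 < s" "s < 1/2" shows "complex_of_real s * complex_of_real s \<noteq> 1"
proof -
  have "s * s < (1/2)*(1/2)" by (rule mult_strict_mono) (use assms in auto)
  then have "s * s \<noteq> 1" by simp
  then show ?thesis by (metis of_real_1 of_real_eq_iff of_real_mult)
qed

theorem mainTheorem4:
  fixes S :: "(nat\<times>nat\<times>nat) set" and c :: "nat\<times>nat\<times>nat \<Rightarrow> complex"
  assumes "finite S"
    and "\<And>Q M1 M2 M3 C1 C2 C3 l12 l13 l21 l23 l31 l32.
           V3_data Q M1 M2 M3 C1 C2 C3 l12 l13 l21 l23 l31 l32 \<Longrightarrow>
           poly3_eval S c (alpha_sq C1 l12 l13) (alpha_sq C2 l21 l23) (alpha_sq C3 l31 l32) = 0"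
  shows "\<forall>e\<in>S. c e = 0"
proof (rule poly3_zero[OF assms(1)])
  fix x y w :: real
  assume xb: "0 < x" "x < 1/4" and yb: "0 < y" "y < 1/4" and wb: "0 < w" "w < 1/4"
  define p q r where "p = sqrt w" and "q = sqrt y" and "r = sqrt x"
  have pb: "0 < p" "p < 1/2" unfolding p_def using sqrt_bnd[OF wb] by auto
  have qb: "0 < q" "q < 1/2" unfolding q_def using sqrt_bnd[OF yb] by auto
  have rb: "0 < r" "r < 1/2" unfolding r_def using sqrt_bnd[OF xb] by auto
  let ?a = "complex_of_real p" and ?b = "complex_of_real q" and ?c = "complex_of_real r"
  have V: "V3_data (Qm ?a ?b ?c) Mp1 Mp2 Mp3 (Cm ?c) (Cm ?b) (Cm ?a) ev1 ev2 ev1 ev2 ev1 ev2"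
    unfolding V3_data_def
    using nq[OF pb qb rb] pp cq1 cq2 cq3 il12 il13 il21 il23 il31 il32 ad
      nc[OF sq_ne1[OF pb]] nc[OF sq_ne1[OF qb]] nc[OF sq_ne1[OF rb]] by simp
  have "?a^2 = of_real w" "?b^2 = of_real y" "?c^2 = of_real x"
    unfolding p_def q_def r_def using xb yb wb by (simp_all flip: of_real_power)
  then show "poly3_eval S c (of_real x) (of_real y) (of_real w) = 0"
    using assms(2)[OF V] unfolding alpha_Cm by simp
qed

end
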